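(* Let $G$ be a locally compact (Hausdorff) topological group. Then $G$ is approximable by finite $l$-quasigroups, and likewise $G$ is approximable by finite $r$-quasigroups.
   Context: A (finite) $l$-quasigroup is a set $H$ with a binary operation $\odot$ such that for all $a,b\in H$ the equation $a\odot x=b$ has a unique solution $x\in H$; an $r$-quasigroup is defined in the same way with the equation $x\odot a=b$. Approximability: let $C\subseteq G$ be compact, $U$ a neighborhood of the unit of $G$, and $(H,\odot)$ a finite algebra (a set with one binary operation). A set $M\subseteq G$ is a $U$-grid of $C$ if $C\subseteq MU=\{mu: m\in M,u\in U\}$. A map $j:H\to G$ is a $(C,U)$-homomorphism if for all $x,y\in H$ with $j(x),j(y),j(x)j(y)\in C$ one has $j(x\odot y)\in j(x)j(y)U$. The pair $(H,j)$ is a $(C,U)$-approximation of $G$ if $j(H)$ is a $U$-grid of $C$ and $j$ is a $(C,U)$-homomorphism. For a class $\mathcal K$ of finite algebras, $G$ is approximable by systems of $\mathcal K$ if for every compact $C\subseteq G$ and every neighborhood $U$ of the unit there is a $(C,U)$-approximation $(H,j)$ of $G$ with $H\in\mathcal K$ and $j$ injective. *)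

theory Defs
  imports "HOL-Analysis.Analysis"
begin

text \<open>The topological group G is written additively (class topological_group_add,
which extends group_add; group_add is NOT assumed commutative). The unit is 0 and
the product m u is m + u.\<close>

definition algebra_on :: "'h set \<Rightarrow> ('h \<Rightarrow> 'h \<Rightarrow> 'h) \<Rightarrow> bool" where
  "algebra_on H f \<longleftrightarrow> finite H \<and> (\<forall>a\<in>H. \<forall>b\<in>H. f a b \<in> H)"

definition l_quasigroup :: "'h set \<Rightarrow> ('h \<Rightarrow> 'h \<Rightarrow> 'h) \<Rightarrow> bool" where
  "l_quasigroup H f \<longleftrightarrow> algebra_on H f \<and> (\<forall>a\<in>H. \<forall>b\<in>H. \<exists>!x. x \<in> H \<and> f a x = b)"

definition r_quasigroup :: "'h set \<Rightarrow> ('h \<Rightarrow> 'h \<Rightarrow> 'h) \<Rightarrow> bool" where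
  "r_quasigroup H f \<longleftrightarrow> algebra_on H f \<and> (\<forall>a\<in>H. \<forall>b\<in>H. \<exists>!x. x \<in> H \<and> f x a = b)"

definition is_grid :: "'g::group_add set \<Rightarrow> 'g set \<Rightarrow> 'g set \<Rightarrow> bool" where
  "is_grid U C M \<longleftrightarrow> C \<subseteq> {m + u | m u. m \<in> M \<and> u \<in> U}"

definition CU_hom :: "'g::group_add set \<Rightarrow> 'g set \<Rightarrow> 'h set \<Rightarrow> ('h \<Rightarrow> 'h \<Rightarrow> 'h) \<Rightarrow> ('h \<Rightarrow> 'g) \<Rightarrow> bool" where
  "CU_hom C U H f j \<longleftrightarrow> (\<forall>x\<in>H. \<forall>y\<in>H. j x \<in> C \<and> j y \<in> C \<and> j x + j y \<in> C
      \<longrightarrow> j (f x y) \<in> {j x + j y + u | u. u \<in> U})"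

definition CU_approximation :: "'g::group_add set \<Rightarrow> 'g set \<Rightarrow> 'h set \<Rightarrow> ('h \<Rightarrow> 'h \<Rightarrow> 'h) \<Rightarrow> ('h \<Rightarrow> 'g) \<Rightarrow> bool" where
  "CU_approximation C U H f j \<longleftrightarrow> is_grid U C (j ` H) \<and> CU_hom C U H f j"

text \<open>Approximability by systems of a class K of finite algebras. Finite algebras are
represented (up to isomorphism) with carriers H :: nat set.\<close>
definition approximable_by :: "(nat set \<Rightarrow> (nat \<Rightarrow> nat \<Rightarrow> nat) \<Rightarrow> bool) \<Rightarrow> 'g::topological_group_add itself \<Rightarrow> bool" where
  "approximable_by K (TYPE('g)) \<longleftrightarrow>
    (\<forall>(C::'g set) U. compact C \<and> 0 \<in> interior U \<longrightarrow>
       (\<exists>H f j. algebra_on H f \<and> K H f \<and> CU_approximation C U H f j \<and> inj_on j H))"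

end

theory Submission
  imports Defs
begin


lemma hall:
  fixes N :: "'a \<Rightarrow> 'b set"
  assumes "finite Y" "\<forall>y\<in>Y. finite (N y)" "\<forall>S\<subseteq>Y. card S \<le> card (\<Union>(N ` S))"
  shows "\<exists>\<phi>. inj_on \<phi> Y \<and> (\<forall>y\<in>Y. \<phi> y \<in> N y)"
  using assms
proof (induction "card Y" arbitrary: Y N rule: less_induct)
  case less
  note fin = less.prems(1) and finN = less.prems(2) and H = less.prems(3)
  have finU: "finite (\<Union>(N ` S))" if "S \<subseteq> Y" for S
    using that fin finN by (meson finite_UN_I finite_subset subsetD)
  show ?case
  proof (cases "Y = {}")
    case True then show ?thesis by auto
  next
    case False
    show ?thesis
    proof (cases "\<exists>S. S \<subseteq> Y \<and> S \<noteq> {} \<and> S \<noteq> Y \<and> card (\<Union>(N ` S)) = card S")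
      case True
      then obtain S where S: "S \<subseteq> Y" "S \<noteq> {}" "S \<noteq> Y" "card (\<Union>(N ` S)) = card S" by blast
      have fS: "finite S" using S fin finite_subset by blast
      have cS: "card S < card Y" using S fin by (meson psubset_card_mono psubsetI)
      have HS: "\<forall>T\<subseteq>S. card T \<le> card (\<Union>(N ` T))"
        using S by (intro allI impI, intro H[rule_format]) auto
      have fNS: "\<forall>y\<in>S. finite (N y)" using finN S by auto
      obtain \<phi>1 where p1: "inj_on \<phi>1 S" "\<forall>y\<in>S. \<phi>1 y \<in> N y"
        using less.hyps[OF cS fS fNS HS] by blast
      define N2 where "N2 y = N y - \<Union>(N ` S)" for y
      have cY: "card (Y - S) < card Y" using S fin
        by (metis Diff_subset card_Diff_subset card_gt_0_iff diff_less fS finite_subset subset_empty)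
      have H2: "\<forall>T\<subseteq>Y - S. card T \<le> card (\<Union>(N2 ` T))"
      proof (intro allI impI)
        fix T assume T: "T \<subseteq> Y - S"
        have fT: "finite T" using T fin finite_subset by blast
        have eq: "\<Union>(N2 ` T) = \<Union>(N ` (T \<union> S)) - \<Union>(N ` S)" unfolding N2_def by auto
        have "card (\<Union>(N2 ` T)) = card (\<Union>(N ` (T \<union> S))) - card (\<Union>(N ` S))"
          unfolding eq by (rule card_Diff_subset) (use finU S in auto)
        moreover have "card (T \<union> S) \<le> card (\<Union>(N ` (T \<union> S)))"
          using T S by (intro H[rule_format]) auto
        moreover have "card (T \<union> S) = card T + card S" using T fT fS
          by (subst card_Un_disjoint) auto
        ultimately show "card T \<le> card (\<Union>(N2 ` T))" using S(4) by linarith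
      qed
      obtain \<phi>2 where p2: "inj_on \<phi>2 (Y - S)" "\<forall>y\<in>Y - S. \<phi>2 y \<in> N2 y"
        using less.hyps[OF cY _ _ H2] fin finN unfolding N2_def by auto
      define \<phi> where "\<phi> y = (if y \<in> S then \<phi>1 y else \<phi>2 y)" for y
      have "inj_on \<phi> Y"
      proof (rule inj_onI)
        fix x y assume xy: "x \<in> Y" "y \<in> Y" "\<phi> x = \<phi> y"
        show "x = y"
        proof (cases "x \<in> S"; cases "y \<in> S")
          assume "x \<in> S" "y \<in> S" then show ?thesis using xy p1 unfolding \<phi>_def by (auto dest: inj_onD)
        next
          assume "x \<notin> S" "y \<notin> S" then show ?thesis using xy p2 unfolding \<phi>_def by (auto dest: inj_onD)
        next
          assume a: "x \<in> S" "y \<notin> S"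
          have "\<phi>2 y \<notin> N x" using p2 a xy unfolding N2_def by auto
          moreover have "\<phi>1 x \<in> N x" using p1 a by auto
          ultimately show ?thesis using xy(3) a unfolding \<phi>_def by auto
        next
          assume a: "x \<notin> S" "y \<in> S"
          have "\<phi>2 x \<notin> N y" using p2 a xy unfolding N2_def by auto
          moreover have "\<phi>1 y \<in> N y" using p1 a by auto
          ultimately show ?thesis using xy(3) a unfolding \<phi>_def by auto
        qed
      qed
      moreover have "\<forall>y\<in>Y. \<phi> y \<in> N y" using p1 p2 unfolding \<phi>_def N2_def by auto
      ultimately show ?thesis by blast
    next
      case False
      then have strict: "card S < card (\<Union>(N ` S))" if "S \<subseteq> Y" "S \<noteq> {}" "S \<noteq> Y" for S
        using that H by (metis le_neq_implies_less)
      obtain y0 where y0: "y0 \<in> Y" using \<open>Y \<noteq> {}\<close> by blast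
      have "card {y0} \<le> card (N y0)" using H[rule_format, of "{y0}"] y0 by simp
      then have "N y0 \<noteq> {}" by auto
      then obtain m where m: "m \<in> N y0" by blast
      define N2 where "N2 y = N y - {m}" for y
      have cY: "card (Y - {y0}) < card Y" using y0 fin by (meson card_Diff1_less)
      have H2: "\<forall>T\<subseteq>Y - {y0}. card T \<le> card (\<Union>(N2 ` T))"
      proof (intro allI impI)
        fix T assume T: "T \<subseteq> Y - {y0}"
        show "card T \<le> card (\<Union>(N2 ` T))"
        proof (cases "T = {}")
          case True then show ?thesis by simp
        next
          case False
          have "T \<noteq> Y" using T y0 by auto
          then have lt: "card T < card (\<Union>(N ` T))" using strict[of T] T False by auto
          have eq: "\<Union>(N2 ` T) = \<Union>(N ` T) - {m}" unfolding N2_def by auto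
          have "card (\<Union>(N ` T)) - 1 \<le> card (\<Union>(N2 ` T))"
            unfolding eq by (metis card_Diff_singleton_if diff_le_self order_refl)
          then show ?thesis using lt by linarith
        qed
      qed
      obtain \<phi>2 where p2: "inj_on \<phi>2 (Y - {y0})" "\<forall>y\<in>Y - {y0}. \<phi>2 y \<in> N2 y"
        using less.hyps[OF cY _ _ H2] fin finN unfolding N2_def by auto
      define \<phi> where "\<phi> = \<phi>2(y0 := m)"
      have "inj_on \<phi> Y"
      proof (rule inj_onI)
        fix x y assume xy: "x \<in> Y" "y \<in> Y" "\<phi> x = \<phi> y"
        have ne: "\<phi>2 z \<noteq> m" if "z \<in> Y - {y0}" for z using p2 that unfolding N2_def by auto
        show "x = y"
        proof (cases "x = y0"; cases "y = y0")
          assume "x \<noteq> y0" "y \<noteq> y0" then show ?thesis using xy p2(1) unfolding \<phi>_def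
            by (auto dest: inj_onD)
        qed (use xy ne in \<open>auto simp: \<phi>_def\<close>)
      qed
      moreover have "\<forall>y\<in>Y. \<phi> y \<in> N y" using p2 m unfolding \<phi>_def N2_def by auto
      ultimately show ?thesis by blast
    qed
  qed
qed


lemma extend_perm:
  assumes "finite M" "Y \<subseteq> M" "inj_on \<psi> Y" "\<psi> ` Y \<subseteq> M"
  shows "\<exists>\<pi>. bij_betw \<pi> M M \<and> (\<forall>y\<in>Y. \<pi> y = \<psi> y)"
proof -
  have fY: "finite Y" using assms finite_subset by blast
  have "card (M - Y) = card (M - \<psi> ` Y)"
    using assms fY by (simp add: card_Diff_subset card_image)
  then obtain h where h: "bij_betw h (M - Y) (M - \<psi> ` Y)"
    by (meson assms(1) finite_Diff finite_same_card_bij)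
  define \<pi> where "\<pi> y = (if y \<in> Y then \<psi> y else h y)" for y
  have b0: "bij_betw \<psi> Y (\<psi> ` Y)" by (simp add: assms(3) bij_betw_imageI)
  have b1: "bij_betw \<pi> Y (\<psi> ` Y)"
    by (rule bij_betw_cong[THEN iffD1, OF _ b0]) (simp add: \<pi>_def)
  have b2: "bij_betw \<pi> (M - Y) (M - \<psi> ` Y)"
    by (rule bij_betw_cong[THEN iffD1, OF _ h]) (simp add: \<pi>_def)
  have "bij_betw \<pi> (Y \<union> (M - Y)) (\<psi> ` Y \<union> (M - \<psi> ` Y))"
    by (rule bij_betw_combine[OF b1 b2]) blast
  moreover have "Y \<union> (M - Y) = M" "\<psi> ` Y \<union> (M - \<psi> ` Y) = M" using assms by auto
  ultimately have "bij_betw \<pi> M M" by simp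
  then show ?thesis by (intro exI[of _ \<pi>]) (simp add: \<pi>_def)
qed


lemma transport_l:
  fixes M :: "'g::group_add set" and g :: "'g \<Rightarrow> 'g \<Rightarrow> 'g"
  assumes fin: "finite M" and grid: "is_grid U C M"
    and bij: "\<forall>a\<in>M. bij_betw (g a) M M"
    and hom: "\<forall>x\<in>M. \<forall>y\<in>M. x \<in> C \<and> y \<in> C \<and> x + y \<in> C \<longrightarrow> g x y \<in> {x + y + u | u. u \<in> U}"
  shows "\<exists>(H::nat set) f j. algebra_on H f \<and> l_quasigroup H f \<and> CU_approximation C U H f j \<and> inj_on j H"
proof -
  obtain e where e: "bij_betw e {0..<card M} M" using ex_bij_betw_nat_finite fin by blast
  define H where "H = {0..<card M}"
  define f where "f x y = inv_into H e (g (e x) (e y))" for x y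
  have eH: "e ` H = M" "inj_on e H" using e unfolding H_def bij_betw_def by auto
  have ie: "bij_betw (inv_into H e) M H" using e unfolding H_def by (rule bij_betw_inv_into)
  have gM: "g (e x) (e y) \<in> M" if "x \<in> H" "y \<in> H" for x y
    using bij that eH by (meson bij_betw_apply image_eqI)
  have efe: "e (f x y) = g (e x) (e y)" if "x \<in> H" "y \<in> H" for x y
    unfolding f_def using gM[OF that] eH by (simp add: f_inv_into_f)
  have fH: "f x y \<in> H" if "x \<in> H" "y \<in> H" for x y
    unfolding f_def using gM[OF that] eH by (simp add: inv_into_into)
  have alg: "algebra_on H f" unfolding algebra_on_def H_def using fH H_def by auto
  have bf: "bij_betw (f a) H H" if a: "a \<in> H" for a
  proof -
    have "e a \<in> M" using a eH by blast
    then have gb: "bij_betw (g (e a)) M M" using bij by blast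
    have "bij_betw (inv_into H e \<circ> (g (e a) \<circ> e)) H H"
      using bij_betw_trans[OF bij_betw_trans[OF e gb] ie] unfolding H_def .
    then show ?thesis by (simp add: f_def[abs_def] comp_def)
  qed
  have lq: "l_quasigroup H f" unfolding l_quasigroup_def
  proof (intro conjI alg ballI)
    fix a b assume ab: "a \<in> H" "b \<in> H"
    from bf[OF ab(1)] have "b \<in> f a ` H" "inj_on (f a) H" using ab unfolding bij_betw_def by auto
    then show "\<exists>!x. x \<in> H \<and> f a x = b" by (auto dest: inj_onD)
  qed
  have "CU_approximation C U H f e"
    unfolding CU_approximation_def CU_hom_def using grid eH efe hom by auto
  then show ?thesis using alg lq eH(2) by (intro exI[of _ H] exI[of _ f] exI[of _ e]) simp
qed

lemma transport_r:
  fixes M :: "'g::group_add set" and g :: "'g \<Rightarrow> 'g \<Rightarrow> 'g"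
  assumes fin: "finite M" and grid: "is_grid U C M"
    and bij: "\<forall>b\<in>M. bij_betw (\<lambda>a. g a b) M M"
    and hom: "\<forall>x\<in>M. \<forall>y\<in>M. x \<in> C \<and> y \<in> C \<and> x + y \<in> C \<longrightarrow> g x y \<in> {x + y + u | u. u \<in> U}"
  shows "\<exists>(H::nat set) f j. algebra_on H f \<and> r_quasigroup H f \<and> CU_approximation C U H f j \<and> inj_on j H"
proof -
  obtain e where e: "bij_betw e {0..<card M} M" using ex_bij_betw_nat_finite fin by blast
  define H where "H = {0..<card M}"
  define f where "f x y = inv_into H e (g (e x) (e y))" for x y
  have eH: "e ` H = M" "inj_on e H" using e unfolding H_def bij_betw_def by auto
  have ie: "bij_betw (inv_into H e) M H" using e unfolding H_def by (rule bij_betw_inv_into)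
  have gM: "g (e x) (e y) \<in> M" if "x \<in> H" "y \<in> H" for x y
    using bij that eH by (metis bij_betw_apply image_eqI)
  have efe: "e (f x y) = g (e x) (e y)" if "x \<in> H" "y \<in> H" for x y
    unfolding f_def using gM[OF that] eH by (simp add: f_inv_into_f)
  have fH: "f x y \<in> H" if "x \<in> H" "y \<in> H" for x y
    unfolding f_def using gM[OF that] eH by (simp add: inv_into_into)
  have alg: "algebra_on H f" unfolding algebra_on_def H_def using fH H_def by auto
  have bf: "bij_betw (\<lambda>x. f x b) H H" if b: "b \<in> H" for b
  proof -
    have "e b \<in> M" using b eH by blast
    then have gb: "bij_betw (\<lambda>a. g a (e b)) M M" using bij by blast
    have "bij_betw (inv_into H e \<circ> ((\<lambda>a. g a (e b)) \<circ> e)) H H"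
      using bij_betw_trans[OF bij_betw_trans[OF e gb] ie] unfolding H_def .
    then show ?thesis by (simp add: f_def[abs_def] comp_def)
  qed
  have rq: "r_quasigroup H f" unfolding r_quasigroup_def
  proof (intro conjI alg ballI)
    fix a b assume ab: "a \<in> H" "b \<in> H"
    from bf[OF ab(1)] have "b \<in> (\<lambda>x. f x a) ` H" "inj_on (\<lambda>x. f x a) H" using ab unfolding bij_betw_def by auto
    then show "\<exists>!x. x \<in> H \<and> f x a = b" by (auto dest: inj_onD)
  qed
  have "CU_approximation C U H f e"
    unfolding CU_approximation_def CU_hom_def using grid eH efe hom by auto
  then show ?thesis using alg rq eH(2) by (intro exI[of _ H] exI[of _ f] exI[of _ e]) simp
qed



lemma nbhd_setup:
  fixes C U :: "'g::topological_group_add set"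
  assumes lc: "locally_compact_space (euclidean :: 'g topology)" and C: "compact C"
    and U: "0 \<in> interior U"
  shows "\<exists>V K. open V \<and> 0 \<in> V \<and> compact K \<and> V \<subseteq> K \<and>
    (\<forall>c\<in>insert 0 C. \<forall>v1\<in>V. \<forall>v2\<in>V. -c + (v1 + -v2) + c \<in> U \<and> -c + (-v2 + v1) + c \<in> U)"
proof -
  obtain O0 K :: "'g set" where O0: "open O0" "compact K" "0 \<in> O0" "O0 \<subseteq> K"
  proof -
    have "\<exists>U K. openin euclidean U \<and> compactin euclidean K \<and> (0::'g) \<in> U \<and> U \<subseteq> K"
      using lc unfolding locally_compact_space_def by simp
    then show ?thesis using that by auto
  qed
  define C0 where "C0 = insert 0 C"
  have C0: "compact C0" unfolding C0_def using C by simp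
  define W where "W = interior U"
  have W: "open W" "0 \<in> W" "W \<subseteq> U" using U unfolding W_def by (auto simp: interior_subset)
  define F1 where "F1 q = -snd q + (fst (fst q) + - snd (fst q)) + snd q" for q :: "('g \<times> 'g) \<times> 'g"
  define F2 where "F2 q = -snd q + (- snd (fst q) + fst (fst q)) + snd q" for q :: "('g \<times> 'g) \<times> 'g"
  have c1: "continuous_on UNIV F1" unfolding F1_def by (intro continuous_intros)
  have c2: "continuous_on UNIV F2" unfolding F2_def by (intro continuous_intros)
  have o1: "open (F1 -` W)" using open_vimage[OF W(1) c1] .
  have o2: "open (F2 -` W)" using open_vimage[OF W(1) c2] .
  have s1: "{(0,0)} \<times> C0 \<subseteq> F1 -` W" using W unfolding F1_def by auto
  have s2: "{(0,0)} \<times> C0 \<subseteq> F2 -` W" using W unfolding F2_def by auto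
  obtain X1 where X1: "(0,0) \<in> X1" "open X1" "X1 \<times> C0 \<subseteq> F1 -` W"
    using Elementary_Topology.tube_lemma[OF C0 o1 s1] by blast
  obtain X2 where X2: "(0,0) \<in> X2" "open X2" "X2 \<times> C0 \<subseteq> F2 -` W"
    using Elementary_Topology.tube_lemma[OF C0 o2 s2] by blast
  define X where "X = X1 \<inter> X2 \<inter> (O0 \<times> O0)"
  have oX: "open X" unfolding X_def using X1 X2 O0 by (intro open_Int open_Times) auto
  have X0: "(0,0) \<in> X" unfolding X_def using X1 X2 O0 by auto
  obtain A B where AB: "open A" "open B" "(0,0) \<in> A \<times> B" "A \<times> B \<subseteq> X"
    using open_prod_elim[OF oX X0] by blast
  define V where "V = A \<inter> B"
  have V: "open V" "0 \<in> V" using AB unfolding V_def by auto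
  have VX: "(v1, v2) \<in> X" if "v1 \<in> V" "v2 \<in> V" for v1 v2
    using AB that unfolding V_def by auto
  have VK: "V \<subseteq> K" using VX O0 unfolding X_def by blast
  have "\<forall>c\<in>insert 0 C. \<forall>v1\<in>V. \<forall>v2\<in>V. -c + (v1 + -v2) + c \<in> U \<and> -c + (-v2 + v1) + c \<in> U"
  proof (intro ballI conjI)
    fix c v1 v2 assume h: "c \<in> insert 0 C" "v1 \<in> V" "v2 \<in> V"
    have "((v1, v2), c) \<in> X1 \<times> C0" "((v1, v2), c) \<in> X2 \<times> C0"
      using VX[OF h(2,3)] h(1) unfolding X_def C0_def by auto
    then have "F1 ((v1, v2), c) \<in> W" "F2 ((v1, v2), c) \<in> W" using X1 X2 by blast+
    then show "-c + (v1 + -v2) + c \<in> U" "-c + (-v2 + v1) + c \<in> U"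
      using W unfolding F1_def F2_def by auto
  qed
  then show ?thesis using V VK O0 by blast
qed



lemma min_cover:
  fixes T :: "'g::topological_space \<Rightarrow> 'g set"
  assumes "compact D" "\<forall>m. open (T m)" "\<forall>x\<in>D. x \<in> T x"
  shows "\<exists>M. finite M \<and> D \<subseteq> \<Union>(T ` M) \<and> (\<forall>M'. finite M' \<and> D \<subseteq> \<Union>(T ` M') \<longrightarrow> card M \<le> card M')"
proof -
  have "D \<subseteq> (\<Union>c\<in>D. T c)" using assms(3) by blast
  then obtain M0 where "M0 \<subseteq> D" "finite M0" "D \<subseteq> \<Union>(T ` M0)"
    using compactE_image[OF assms(1), of D T] assms(2) by blast
  then have "finite M0 \<and> D \<subseteq> \<Union>(T ` M0)" by blast
  from ex_has_least_nat[of "\<lambda>M. finite M \<and> D \<subseteq> \<Union>(T ` M)", OF this, of card]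
  show ?thesis by blast
qed

lemma approx_l_main:
  fixes C U :: "'g::topological_group_add set"
  assumes lc: "locally_compact_space (euclidean :: 'g topology)" and C: "compact C"
    and U: "0 \<in> interior U"
  shows "\<exists>M g. finite M \<and> is_grid U C M \<and> (\<forall>a\<in>M. bij_betw (g a) M M) \<and>
     (\<forall>x\<in>M. \<forall>y\<in>M. x \<in> C \<and> y \<in> C \<and> x + y \<in> C \<longrightarrow> g x y \<in> {x + y + u | u. u \<in> U})"
proof -
  obtain V K where VK: "open V" "0 \<in> V" "compact K" "V \<subseteq> K"
    and cond: "\<forall>c\<in>insert 0 C. \<forall>v1\<in>V. \<forall>v2\<in>V. -c + (v1 + -v2) + c \<in> U \<and> -c + (-v2 + v1) + c \<in> U"
    using nbhd_setup[OF lc C U] by blast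
  have cond0: "v1 + -v2 \<in> U" if "v1 \<in> V" "v2 \<in> V" for v1 v2
    using cond that by fastforce
  define D where "D = (\<lambda>p. fst p + snd p) ` (C \<times> K)"
  have cD: "compact D" unfolding D_def
    by (intro compact_continuous_image compact_Times C VK continuous_intros)
  have CD: "c + k \<in> D" if "c \<in> C" "k \<in> K" for c k
    unfolding D_def using that by (intro image_eqI[of _ _ "(c, k)"]) auto
  define T where "T m = (\<lambda>x. -m + x) -` V" for m
  have oT: "\<forall>m. open (T m)" unfolding T_def
    by (intro allI open_vimage VK continuous_intros)
  have xT: "\<forall>x\<in>D. x \<in> T x" unfolding T_def using VK by simp
  obtain M where M: "finite M" "D \<subseteq> \<Union>(T ` M)"
    and Mmin: "\<And>M'. finite M' \<Longrightarrow> D \<subseteq> \<Union>(T ` M') \<Longrightarrow> card M \<le> card M'"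
    using min_cover[OF cD oT xT] by blast
  have cover: "\<exists>m\<in>M. -m + x \<in> V" if "x \<in> D" for x
    using M(2) that unfolding T_def by auto
  define Y where "Y a = {y\<in>M. a + y \<in> C}" for a
  define N where "N a y = {m\<in>M. -(a + y) + m \<in> U}" for a y
  have hallc: "\<forall>S\<subseteq>Y a. card S \<le> card (\<Union>(N a ` S))" if aM: "a \<in> M" for a
  proof (rule ccontr)
    assume "\<not> ?thesis"
    then obtain S where S: "S \<subseteq> Y a" "card (\<Union>(N a ` S)) < card S" by (auto simp: not_le)
    define NS where "NS = \<Union>(N a ` S)"
    define M' where "M' = (M - S) \<union> ((\<lambda>m. -a + m) ` NS)"
    have SM: "S \<subseteq> M" using S unfolding Y_def by auto
    have fS: "finite S" using SM M(1) finite_subset by blast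
    have NSM: "NS \<subseteq> M" unfolding NS_def N_def by auto
    have fNS: "finite NS" using NSM M(1) finite_subset by blast
    have fM': "finite M'" unfolding M'_def using M(1) fNS by auto
    have "card M' \<le> card (M - S) + card ((\<lambda>m. -a + m) ` NS)"
      unfolding M'_def by (rule card_Un_le)
    also have "\<dots> \<le> card (M - S) + card NS" using card_image_le[OF fNS] by simp
    also have "\<dots> < card (M - S) + card S" using S(2) unfolding NS_def by simp
    also have "\<dots> = card M" using SM fS M(1)
      by (simp add: card_Diff_subset card_mono)
    finally have lt: "card M' < card M" .
    have "D \<subseteq> \<Union>(T ` M')"
    proof
      fix x assume xD: "x \<in> D"
      obtain m where m: "m \<in> M" "-m + x \<in> V" using cover[OF xD] by blast
      show "x \<in> \<Union>(T ` M')"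
      proof (cases "m \<in> S")
        case False
        then have "m \<in> M'" unfolding M'_def using m by auto
        then show ?thesis using m unfolding T_def by auto
      next
        case True
        then have asC: "a + m \<in> C" using S unfolding Y_def by auto
        have "(a + m) + (-m + x) \<in> D" using CD[OF asC] m VK by auto
        then have axD: "a + x \<in> D" by (simp add: add.assoc)
        obtain m2 where m2: "m2 \<in> M" "-m2 + (a + x) \<in> V" using cover[OF axD] by blast
        have "(-m + x) + -(-m2 + (a + x)) \<in> U" using cond0[OF m(2) m2(2)] .
        moreover have "(-m + x) + -(-m2 + (a + x)) = -(a + m) + m2"
          by (simp only: minus_add add.assoc minus_minus add_minus_cancel)
        ultimately have "-(a + m) + m2 \<in> U" by simp
        then have "m2 \<in> NS" unfolding NS_def N_def using m2 True by auto
        then have "-a + m2 \<in> M'" unfolding M'_def by auto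
        moreover have "x \<in> T (-a + m2)" unfolding T_def using m2 by (simp add: minus_add add.assoc)
        ultimately show ?thesis by auto
      qed
    qed
    then have "card M \<le> card M'" using Mmin fM' by blast
    then show False using lt by simp
  qed
  have "\<exists>\<pi>. bij_betw \<pi> M M \<and> (\<forall>y\<in>Y a. \<pi> y \<in> N a y)" if aM: "a \<in> M" for a
  proof -
    have fY: "finite (Y a)" using M(1) unfolding Y_def by auto
    have fN: "\<forall>y\<in>Y a. finite (N a y)" using M(1) unfolding N_def by auto
    obtain \<psi> where \<psi>: "inj_on \<psi> (Y a)" "\<forall>y\<in>Y a. \<psi> y \<in> N a y"
      using hall[OF fY fN hallc[OF aM]] by blast
    have "\<psi> ` Y a \<subseteq> M" using \<psi>(2) unfolding N_def by auto
    moreover have "Y a \<subseteq> M" unfolding Y_def by auto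
    ultimately obtain \<pi> where "bij_betw \<pi> M M" "\<forall>y\<in>Y a. \<pi> y = \<psi> y"
      using extend_perm[OF M(1) _ \<psi>(1)] by blast
    then show ?thesis using \<psi>(2) by auto
  qed
  then obtain g where g: "\<forall>a\<in>M. bij_betw (g a) M M \<and> (\<forall>y\<in>Y a. g a y \<in> N a y)"
    by metis
  have grid: "is_grid U C M" unfolding is_grid_def
  proof
    fix c assume cC: "c \<in> C"
    have "0 \<in> K" using VK by auto
    then have "c + 0 \<in> D" using CD[OF cC] by blast
    then obtain m where m: "m \<in> M" "-m + c \<in> V" using cover by auto
    have "-m + c \<in> U" using cond0[OF m(2) VK(2)] by simp
    moreover have "c = m + (-m + c)" by (simp add: add.assoc[symmetric])
    ultimately show "c \<in> {m + u | m u. m \<in> M \<and> u \<in> U}" using m(1) by blast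
  qed
  have hom: "\<forall>x\<in>M. \<forall>y\<in>M. x \<in> C \<and> y \<in> C \<and> x + y \<in> C \<longrightarrow> g x y \<in> {x + y + u | u. u \<in> U}"
  proof (intro ballI impI)
    fix x y assume xy: "x \<in> M" "y \<in> M" "x \<in> C \<and> y \<in> C \<and> x + y \<in> C"
    then have "y \<in> Y x" unfolding Y_def by auto
    then have "-(x + y) + g x y \<in> U" using g xy(1) unfolding N_def by auto
    moreover have "g x y = x + y + (-(x + y) + g x y)" by (simp add: add.assoc[symmetric])
    ultimately show "g x y \<in> {x + y + u | u. u \<in> U}" by blast
  qed
  show ?thesis using M(1) grid g hom by blast
qed



lemma approx_r_main:
  fixes C U :: "'g::topological_group_add set"
  assumes lc: "locally_compact_space (euclidean :: 'g topology)" and C: "compact C"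
    and U: "0 \<in> interior U"
  shows "\<exists>M g. finite M \<and> is_grid U C M \<and> (\<forall>b\<in>M. bij_betw (\<lambda>a. g a b) M M) \<and>
     (\<forall>x\<in>M. \<forall>y\<in>M. x \<in> C \<and> y \<in> C \<and> x + y \<in> C \<longrightarrow> g x y \<in> {x + y + u | u. u \<in> U})"
proof -
  obtain V K where VK: "open V" "0 \<in> V" "compact K" "V \<subseteq> K"
    and cond: "\<forall>c\<in>insert 0 C. \<forall>v1\<in>V. \<forall>v2\<in>V. -c + (v1 + -v2) + c \<in> U \<and> -c + (-v2 + v1) + c \<in> U"
    using nbhd_setup[OF lc C U] by blast
  have cond0: "v1 + -v2 \<in> U" if "v1 \<in> V" "v2 \<in> V" for v1 v2
    using cond that by fastforce
  define D where "D = (\<lambda>p. fst p + snd p) ` (K \<times> C)"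
  have cD: "compact D" unfolding D_def
    by (intro compact_continuous_image compact_Times C VK continuous_intros)
  have CD: "k + c \<in> D" if "c \<in> C" "k \<in> K" for c k
    unfolding D_def using that by (intro image_eqI[of _ _ "(k, c)"]) auto
  define T where "T m = (\<lambda>x. x + -m) -` V" for m
  have oT: "\<forall>m. open (T m)" unfolding T_def
    by (intro allI open_vimage VK continuous_intros)
  have xT: "\<forall>x\<in>D. x \<in> T x" unfolding T_def using VK by simp
  obtain M where M: "finite M" "D \<subseteq> \<Union>(T ` M)"
    and Mmin: "\<And>M'. finite M' \<Longrightarrow> D \<subseteq> \<Union>(T ` M') \<Longrightarrow> card M \<le> card M'"
    using min_cover[OF cD oT xT] by blast
  have cover: "\<exists>m\<in>M. x + -m \<in> V" if "x \<in> D" for x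
    using M(2) that unfolding T_def by auto
  define Y where "Y b = {a\<in>M. a + b \<in> C}" for b
  define N where "N b a = {m\<in>M. -(a + b) + m \<in> U}" for b a
  have hallc: "\<forall>S\<subseteq>Y a. card S \<le> card (\<Union>(N a ` S))" if aM: "a \<in> M" for a
  proof (rule ccontr)
    assume "\<not> ?thesis"
    then obtain S where S: "S \<subseteq> Y a" "card (\<Union>(N a ` S)) < card S" by (auto simp: not_le)
    define NS where "NS = \<Union>(N a ` S)"
    define M' where "M' = (M - S) \<union> ((\<lambda>m. m + -a) ` NS)"
    have SM: "S \<subseteq> M" using S unfolding Y_def by auto
    have fS: "finite S" using SM M(1) finite_subset by blast
    have NSM: "NS \<subseteq> M" unfolding NS_def N_def by auto
    have fNS: "finite NS" using NSM M(1) finite_subset by blast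
    have fM': "finite M'" unfolding M'_def using M(1) fNS by auto
    have "card M' \<le> card (M - S) + card ((\<lambda>m. m + -a) ` NS)"
      unfolding M'_def by (rule card_Un_le)
    also have "\<dots> \<le> card (M - S) + card NS" using card_image_le[OF fNS] by simp
    also have "\<dots> < card (M - S) + card S" using S(2) unfolding NS_def by simp
    also have "\<dots> = card M" using SM fS M(1)
      by (simp add: card_Diff_subset card_mono)
    finally have lt: "card M' < card M" .
    have "D \<subseteq> \<Union>(T ` M')"
    proof
      fix x assume xD: "x \<in> D"
      obtain m where m: "m \<in> M" "x + -m \<in> V" using cover[OF xD] by blast
      show "x \<in> \<Union>(T ` M')"
      proof (cases "m \<in> S")
        case False
        then have "m \<in> M'" unfolding M'_def using m by auto
        then show ?thesis using m unfolding T_def by auto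
      next
        case True
        then have asC: "m + a \<in> C" using S unfolding Y_def by auto
        have "(x + -m) + (m + a) \<in> D" using CD[OF asC] m VK by auto
        moreover have "(x + -m) + (m + a) = x + a" by (simp only: add.assoc minus_add_cancel)
        ultimately have axD: "x + a \<in> D" by simp
        obtain m2 where m2: "m2 \<in> M" "(x + a) + -m2 \<in> V" using cover[OF axD] by blast
        have "-(m + a) + (-((x + a) + -m2) + (x + -m)) + (m + a) \<in> U"
          using cond asC m(2) m2(2) by blast
        moreover have "-(m + a) + (-((x + a) + -m2) + (x + -m)) + (m + a) = -(m + a) + m2"
          by (simp only: minus_add add.assoc minus_minus add_minus_cancel minus_add_cancel left_minus add_0_right)
        ultimately have "-(m + a) + m2 \<in> U" by simp
        then have "m2 \<in> NS" unfolding NS_def N_def using m2 True by auto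
        then have "m2 + -a \<in> M'" unfolding M'_def by auto
        moreover have "x \<in> T (m2 + -a)"
        proof -
          have "x + -(m2 + -a) = (x + a) + -m2" by (simp only: minus_add minus_minus add.assoc)
          then show ?thesis unfolding T_def using m2 by simp
        qed
        ultimately show ?thesis by auto
      qed
    qed
    then have "card M \<le> card M'" using Mmin fM' by blast
    then show False using lt by simp
  qed
  have "\<exists>\<pi>. bij_betw \<pi> M M \<and> (\<forall>y\<in>Y a. \<pi> y \<in> N a y)" if aM: "a \<in> M" for a
  proof -
    have fY: "finite (Y a)" using M(1) unfolding Y_def by auto
    have fN: "\<forall>y\<in>Y a. finite (N a y)" using M(1) unfolding N_def by auto
    obtain \<psi> where \<psi>: "inj_on \<psi> (Y a)" "\<forall>y\<in>Y a. \<psi> y \<in> N a y"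
      using hall[OF fY fN hallc[OF aM]] by blast
    have "\<psi> ` Y a \<subseteq> M" using \<psi>(2) unfolding N_def by auto
    moreover have "Y a \<subseteq> M" unfolding Y_def by auto
    ultimately obtain \<pi> where "bij_betw \<pi> M M" "\<forall>y\<in>Y a. \<pi> y = \<psi> y"
      using extend_perm[OF M(1) _ \<psi>(1)] by blast
    then show ?thesis using \<psi>(2) by auto
  qed
  then obtain P where P: "\<forall>a\<in>M. bij_betw (P a) M M \<and> (\<forall>y\<in>Y a. P a y \<in> N a y)"
    by metis
  define g where "g x y = P y x" for x y
  have g: "\<forall>b\<in>M. bij_betw (\<lambda>a. g a b) M M \<and> (\<forall>y\<in>Y b. g y b \<in> N b y)"
    using P unfolding g_def by (simp add: eta_contract_eq)
  have grid: "is_grid U C M" unfolding is_grid_def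
  proof
    fix c assume cC: "c \<in> C"
    have "0 \<in> K" using VK by auto
    then have "0 + c \<in> D" using CD[OF cC] by blast
    then obtain m where m: "m \<in> M" "c + -m \<in> V" using cover by auto
    have "-c + (-0 + (c + -m)) + c \<in> U" using cond m(2) VK(2) cC by blast
    moreover have "-c + (-0 + (c + -m)) + c = -m + c"
      by (simp only: minus_zero add_0_left add.assoc minus_add_cancel)
    ultimately have "-m + c \<in> U" by simp
    moreover have "c = m + (-m + c)" by (simp add: add.assoc[symmetric])
    ultimately show "c \<in> {m + u | m u. m \<in> M \<and> u \<in> U}" using m(1) by blast
  qed
  have hom: "\<forall>x\<in>M. \<forall>y\<in>M. x \<in> C \<and> y \<in> C \<and> x + y \<in> C \<longrightarrow> g x y \<in> {x + y + u | u. u \<in> U}"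
  proof (intro ballI impI)
    fix x y assume xy: "x \<in> M" "y \<in> M" "x \<in> C \<and> y \<in> C \<and> x + y \<in> C"
    then have "x \<in> Y y" unfolding Y_def by auto
    then have "-(x + y) + g x y \<in> U" using g xy(2) unfolding N_def by auto
    moreover have "g x y = x + y + (-(x + y) + g x y)" by (simp add: add.assoc[symmetric])
    ultimately show "g x y \<in> {x + y + u | u. u \<in> U}" by blast
  qed
  show ?thesis using M(1) grid g hom by blast
qed


theorem theorem1:
  assumes "locally_compact_space (euclidean :: ('g::{topological_group_add, t2_space}) topology)"
  shows "approximable_by l_quasigroup TYPE('g) \<and> approximable_by r_quasigroup TYPE('g)"
proof
  show "approximable_by l_quasigroup TYPE('g)" unfolding approximable_by_def
  proof (intro allI impI)
    fix C U :: "'g set" assume h: "compact C \<and> 0 \<in> interior U"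
    then obtain M g where "finite M" "is_grid U C M" "\<forall>a\<in>M. bij_betw (g a) M M"
      "\<forall>x\<in>M. \<forall>y\<in>M. x \<in> C \<and> y \<in> C \<and> x + y \<in> C \<longrightarrow> g x y \<in> {x + y + u | u. u \<in> U}"
      using approx_l_main[OF assms conjunct1[OF h] conjunct2[OF h]] by blast
    from transport_l[OF this]
    show "\<exists>(H::nat set) f j. algebra_on H f \<and> l_quasigroup H f \<and> CU_approximation C U H f j \<and> inj_on j H" .
  qed
next
  show "approximable_by r_quasigroup TYPE('g)" unfolding approximable_by_def
  proof (intro allI impI)
    fix C U :: "'g set" assume h: "compact C \<and> 0 \<in> interior U"
    then obtain M g where "finite M" "is_grid U C M" "\<forall>b\<in>M. bij_betw (\<lambda>a. g a b) M M"
      "\<forall>x\<in>M. \<forall>y\<in>M. x \<in> C \<and> y \<in> C \<and> x + y \<in> C \<longrightarrow> g x y \<in> {x + y + u | u. u \<in> U}"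
      using approx_r_main[OF assms conjunct1[OF h] conjunct2[OF h]] by blast
    from transport_r[OF this]
    show "\<exists>(H::nat set) f j. algebra_on H f \<and> r_quasigroup H f \<and> CU_approximation C U H f j \<and> inj_on j H" .
  qed
qed

end
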